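(* Every regular element $\gamma\in\mathfrak{t}(F)$ is conjugate under the Weyl group $W=\mathfrak{S}_d$ to at least one element in minimal form.
   Context: $F=k((\epsilon))$ with $\mathrm{val}(\epsilon)=1$; $G=\mathrm{GL}_d$, $T$ the diagonal torus, $\mathfrak{t}$ its Lie algebra; $W=\mathfrak{S}_d$ acts by permuting diagonal entries. For $\gamma=\mathrm{diag}(\gamma_1,\dots,\gamma_d)$, $\alpha_{i,j}(\gamma)=\gamma_i-\gamma_j$ and $\alpha_l=\alpha_{l,l+1}$. A regular $\gamma\in\mathfrak{t}(F)$ is in minimal form if $\mathrm{val}(\alpha_{i,j}(\gamma))=\min_{i\le l\le j-1}\mathrm{val}(\alpha_l(\gamma))$ for all $1\le i<j\le d$. *)

theory Defs
  imports "HOL-Computational_Algebra.Formal_Laurent_Series" "HOL-Combinatorics.Permutations"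
begin

text \<open>F = k((eps)) is the type 'k fls; its valuation is fls_subdegree (only applied to nonzero
elements below). A diagonal element gamma of t(F) for GL_d is a function from the
index set {0..<d} (indices shifted from 1..d to 0..d-1) to 'k fls.\<close>

definition val :: "'k::field fls \<Rightarrow> int" where
  "val x = fls_subdegree x"

definition alpha :: "(nat \<Rightarrow> 'k::field fls) \<Rightarrow> nat \<Rightarrow> nat \<Rightarrow> 'k fls" where
  "alpha \<gamma> i j = \<gamma> i - \<gamma> j"

definition regular_t :: "nat \<Rightarrow> (nat \<Rightarrow> 'k::field fls) \<Rightarrow> bool" where
  "regular_t d \<gamma> \<longleftrightarrow> (\<forall>i<d. \<forall>j<d. i \<noteq> j \<longrightarrow> alpha \<gamma> i j \<noteq> 0)"

definition minimal_form :: "nat \<Rightarrow> (nat \<Rightarrow> 'k::field fls) \<Rightarrow> bool" where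
  "minimal_form d \<gamma> \<longleftrightarrow>
     (\<forall>i j. i < j \<and> j < d \<longrightarrow>
        val (alpha \<gamma> i j) = Min ((\<lambda>l. val (alpha \<gamma> l (Suc l))) ` {i..<j}))"

definition weyl_act :: "(nat \<Rightarrow> nat) \<Rightarrow> (nat \<Rightarrow> 'a) \<Rightarrow> (nat \<Rightarrow> 'a)" where
  "weyl_act w \<gamma> = (\<lambda>i. \<gamma> (inv w i))"

end

theory Submission
  imports Defs
begin

lemma ultra:
  fixes x y z :: "'k::field fls"
  assumes "x \<noteq> z"
  shows "val (x - z) \<ge> min (val (x - y)) (val (y - z))"
proof -
  have e: "(x - y) + (y - z) = x - z" by simp
  have "(x - y) + (y - z) \<noteq> 0" using assms by simp
  then have "fls_subdegree ((x - y) + (y - z)) \<ge> min (fls_subdegree (x - y)) (fls_subdegree (y - z))"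
    by (rule fls_plus_subdegree)
  then show ?thesis unfolding val_def e .
qed

definition goodP :: "'k::field fls list \<Rightarrow> bool" where
  "goodP xs \<longleftrightarrow> (\<forall>i l j. i < l \<and> l < j \<and> j < length xs \<longrightarrow>
     val (xs!i - xs!j) \<le> val (xs!i - xs!l) \<and> val (xs!i - xs!j) \<le> val (xs!l - xs!j))"

lemma exists_list:
  fixes S :: "'k::field fls set"
  assumes "finite S"
  shows "\<exists>xs. distinct xs \<and> set xs = S \<and> goodP xs"
  using assms
proof (induction "card S" arbitrary: S rule: less_induct)
  case less
  show ?case
  proof (cases "card S \<le> 1")
    case True
    obtain xs where xs: "distinct xs" "set xs = S"
      using finite_distinct_list[OF less.prems] by blast
    then have "length xs \<le> 1" using True distinct_card by fastforce
    then have "goodP xs" unfolding goodP_def by auto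
    with xs show ?thesis by blast
  next
    case False
    define A where "A = {val (x - y) | x y. x \<in> S \<and> y \<in> S \<and> x \<noteq> y}"
    have Aeq: "A = (\<lambda>(x,y). val (x - y)) ` ((S \<times> S) \<inter> {(x,y). x \<noteq> y})"
      unfolding A_def by auto
    have finA: "finite A" unfolding Aeq using less.prems by auto
    obtain a b where ab: "a \<in> S" "b \<in> S" "a \<noteq> b"
      using False less.prems card_le_Suc0_iff_eq[of S] by auto
    then have neA: "A \<noteq> {}" unfolding A_def by blast
    define m where "m = Min A"
    have mle: "\<And>x y. x \<in> S \<Longrightarrow> y \<in> S \<Longrightarrow> x \<noteq> y \<Longrightarrow> m \<le> val (x - y)"
      unfolding m_def using finA by (intro Min_le) (auto simp: A_def)
    have "m \<in> A" unfolding m_def using finA neA by (rule Min_in)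
    then obtain x0 y0 where x0: "x0 \<in> S" "y0 \<in> S" "x0 \<noteq> y0" "val (x0 - y0) = m"
      unfolding A_def by blast
    define C where "C = {x\<in>S. x = x0 \<or> m < val (x - x0)}"
    have y0C: "y0 \<notin> C" using x0 fls_subdegree_minus_sym[of y0 x0]
      unfolding C_def val_def by auto
    have x0C: "x0 \<in> C" using x0 unfolding C_def by auto
    have CS: "C \<subseteq> S" unfolding C_def by auto
    have cross: "val (c - e) \<le> m" if "c \<in> C" "e \<in> S - C" for c e
    proof -
      have e: "e \<noteq> x0" "\<not> m < val (e - x0)" "e \<in> S" using that unfolding C_def by auto
      show ?thesis
      proof (cases "c = x0")
        case True then show ?thesis using e fls_subdegree_minus_sym[of c e] unfolding val_def by auto
      next
        case F: False
        show ?thesis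
        proof (rule ccontr)
          assume "\<not> val (c - e) \<le> m"
          then have "m < val (e - c)" using fls_subdegree_minus_sym[of c e] unfolding val_def by auto
          moreover have "m < val (c - x0)" using that F unfolding C_def by auto
          ultimately have "m < val (e - x0)" using ultra[of e x0 c] e by linarith
          with e show False by auto
        qed
      qed
    qed
    have c1: "card C < card S"
      using CS y0C x0 less.prems by (intro psubset_card_mono) auto
    have c2: "card (S - C) < card S"
      using x0C x0 less.prems by (intro psubset_card_mono) auto
    obtain xs where xs: "distinct xs" "set xs = C" "goodP xs"
      using less.hyps[OF c1] less.prems CS finite_subset by blast
    obtain ys where ys: "distinct ys" "set ys = S - C" "goodP ys"
      using less.hyps[OF c2] less.prems by blast
    define zs where "zs = xs @ ys"
    have dz: "distinct zs" unfolding zs_def using xs ys by auto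
    have sz: "set zs = S" unfolding zs_def using xs ys CS by auto
    have "goodP zs" unfolding goodP_def
    proof (intro allI impI)
      fix i l j assume h: "i < l \<and> l < j \<and> j < length zs"
      show "val (zs!i - zs!j) \<le> val (zs!i - zs!l) \<and> val (zs!i - zs!j) \<le> val (zs!l - zs!j)"
      proof (cases "j < length xs")
        case True
        then have "zs!i = xs!i" "zs!l = xs!l" "zs!j = xs!j" using h unfolding zs_def
          by (simp_all add: nth_append)
        moreover have "i < l \<and> l < j \<and> j < length xs" using h True by simp
        ultimately show ?thesis
          using xs(3)[unfolded goodP_def, rule_format, of i l j] by simp
      next
        case jF: False
        show ?thesis
        proof (cases "i < length xs")
          case False
          then have "zs!i = ys!(i - length xs)" "zs!l = ys!(l - length xs)" "zs!j = ys!(j - length xs)"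
            using h unfolding zs_def by (simp_all add: nth_append)
          moreover have "i - length xs < l - length xs \<and> l - length xs < j - length xs \<and>
            j - length xs < length ys" using h False unfolding zs_def by auto
          ultimately show ?thesis
            using ys(3)[unfolded goodP_def, rule_format, of "i - length xs" "l - length xs" "j - length xs"]
            by simp
        next
          case True
          have "zs!i = xs!i" unfolding zs_def using True by (simp add: nth_append)
          moreover have "xs!i \<in> C" using xs(2) True nth_mem[of i xs] by simp
          ultimately have zi: "zs!i \<in> C" by simp
          have jl: "j - length xs < length ys" using h jF unfolding zs_def by auto
          have "zs!j = ys!(j - length xs)" unfolding zs_def using jF by (simp add: nth_append)
          moreover have "ys!(j - length xs) \<in> S - C" using ys(2) jl nth_mem[of "j - length xs" ys] by simp
          ultimately have zj: "zs!j \<in> S - C" by simp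
          have v: "val (zs!i - zs!j) \<le> m" using cross[OF zi zj] .
          have inS: "zs!i \<in> S" "zs!l \<in> S" "zs!j \<in> S"
            using h sz nth_mem[of i zs] nth_mem[of l zs] nth_mem[of j zs] by auto
          have ne: "zs!i \<noteq> zs!l" "zs!l \<noteq> zs!j" using h nth_eq_iff_index_eq[OF dz] by auto
          show ?thesis using v mle[OF inS(1,2) ne(1)] mle[OF inS(2,3) ne(2)] by linarith
        qed
      qed
    qed
    with dz sz show ?thesis by blast
  qed
qed

lemma minform:
  fixes g :: "nat \<Rightarrow> 'k::field fls"
  assumes P: "\<And>i l j. i < l \<Longrightarrow> l < j \<Longrightarrow> j < d \<Longrightarrow>
     val (g i - g j) \<le> val (g i - g l) \<and> val (g i - g j) \<le> val (g l - g j)"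
  and inj: "\<And>i j. i < d \<Longrightarrow> j < d \<Longrightarrow> i \<noteq> j \<Longrightarrow> g i \<noteq> g j"
  shows "minimal_form d g"
  unfolding minimal_form_def
proof (intro allI impI)
  fix i j :: nat assume ij: "i < j \<and> j < d"
  have "\<forall>j. i < j \<longrightarrow> j < d \<longrightarrow>
     val (alpha g i j) = Min ((\<lambda>l. val (alpha g l (Suc l))) ` {i..<j})"
  proof (intro allI)
    fix j show "i < j \<longrightarrow> j < d \<longrightarrow>
     val (alpha g i j) = Min ((\<lambda>l. val (alpha g l (Suc l))) ` {i..<j})"
    proof (induction j)
      case 0 then show ?case by simp
    next
      case (Suc j)
      show ?case
      proof (intro impI)
        assume a: "i < Suc j" "Suc j < d"
        show "val (alpha g i (Suc j)) = Min ((\<lambda>l. val (alpha g l (Suc l))) ` {i..<Suc j})"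
        proof (cases "j = i")
          case True then show ?thesis by simp
        next
          case False
          then have ij': "i < j" using a by simp
          have IH: "val (alpha g i j) = Min ((\<lambda>l. val (alpha g l (Suc l))) ` {i..<j})"
            using Suc.IH ij' a by simp
          have "{i..<Suc j} = insert j {i..<j}" using ij' by auto
          then have "Min ((\<lambda>l. val (alpha g l (Suc l))) ` {i..<Suc j})
              = min (val (alpha g j (Suc j))) (Min ((\<lambda>l. val (alpha g l (Suc l))) ` {i..<j}))"
            using ij' by (simp add: Min_insert)
          also have "\<dots> = min (val (alpha g j (Suc j))) (val (alpha g i j))" using IH by simp
          also have "\<dots> = val (alpha g i (Suc j))"
          proof -
            have "g i \<noteq> g (Suc j)" using inj a ij' by simp
            then have "val (g i - g (Suc j)) \<ge> min (val (g i - g j)) (val (g j - g (Suc j)))"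
              by (rule ultra)
            moreover have "val (g i - g (Suc j)) \<le> val (g i - g j) \<and>
                val (g i - g (Suc j)) \<le> val (g j - g (Suc j))" using P[of i j "Suc j"] ij' a by simp
            ultimately show ?thesis unfolding alpha_def by linarith
          qed
          finally show ?thesis by simp
        qed
      qed
    qed
  qed
  then show "val (alpha g i j) = Min ((\<lambda>l. val (alpha g l (Suc l))) ` {i..<j})"
    using ij by blast
qed

theorem mainTheorem18:
  fixes d :: nat and \<gamma> :: "nat \<Rightarrow> 'k::field fls"
  assumes "regular_t d \<gamma>"
  shows "\<exists>w. w permutes {..<d} \<and> minimal_form d (weyl_act w \<gamma>)"
proof -
  have injg: "inj_on \<gamma> {..<d}"
    using assms unfolding regular_t_def alpha_def inj_on_def by auto
  obtain xs where xs: "distinct xs" "set xs = \<gamma> ` {..<d}" "goodP xs"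
    using exists_list[of "\<gamma> ` {..<d}"] by blast
  have lx: "length xs = d"
  proof -
    have "length xs = card (set xs)" using xs(1) by (simp add: distinct_card)
    also have "\<dots> = d" using xs(2) injg by (simp add: card_image)
    finally show ?thesis .
  qed
  define \<sigma> where "\<sigma> i = (if i < d then (THE j. j < d \<and> \<gamma> j = xs!i) else i)" for i
  have sig: "\<sigma> i < d \<and> \<gamma> (\<sigma> i) = xs!i" if "i < d" for i
  proof -
    have "xs!i \<in> \<gamma> ` {..<d}" using that lx xs(2) nth_mem[of i xs] by simp
    then obtain j where j: "j < d" "\<gamma> j = xs!i" by auto
    have "\<exists>!j. j < d \<and> \<gamma> j = xs!i" using j injg unfolding inj_on_def by auto
    then have "(THE j. j < d \<and> \<gamma> j = xs!i) < d \<and> \<gamma> (THE j. j < d \<and> \<gamma> j = xs!i) = xs!i"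
      by (rule theI')
    then show ?thesis using that unfolding \<sigma>_def by simp
  qed
  have injs: "inj_on \<sigma> {..<d}"
    unfolding inj_on_def
  proof (intro ballI impI)
    fix a b assume "a \<in> {..<d}" "b \<in> {..<d}" "\<sigma> a = \<sigma> b"
    then have "xs!a = xs!b" using sig[of a] sig[of b] by simp
    then show "a = b" using xs(1) lx \<open>a \<in> {..<d}\<close> \<open>b \<in> {..<d}\<close> by (simp add: nth_eq_iff_index_eq)
  qed
  have img: "\<sigma> ` {..<d} \<subseteq> {..<d}" using sig by auto
  have "\<sigma> ` {..<d} = {..<d}" using endo_inj_surj[OF _ img injs] by simp
  then have bij: "bij_betw \<sigma> {..<d} {..<d}" using injs by (simp add: bij_betw_def)
  have perm: "\<sigma> permutes {..<d}"
    by (rule bij_imp_permutes[OF bij]) (simp add: \<sigma>_def)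
  define w where "w = inv \<sigma>"
  have wp: "w permutes {..<d}" unfolding w_def using perm by (rule permutes_inv)
  have ww: "inv w = \<sigma>" unfolding w_def using perm by (rule permutes_inv_inv)
  have act: "weyl_act w \<gamma> i = xs!i" if "i < d" for i
    unfolding weyl_act_def ww using sig that by simp
  have "minimal_form d (weyl_act w \<gamma>)"
  proof (rule minform)
    fix i l j assume "i < l" "l < j" "j < d"
    then show "val (weyl_act w \<gamma> i - weyl_act w \<gamma> j) \<le> val (weyl_act w \<gamma> i - weyl_act w \<gamma> l) \<and>
       val (weyl_act w \<gamma> i - weyl_act w \<gamma> j) \<le> val (weyl_act w \<gamma> l - weyl_act w \<gamma> j)"
      using xs(3) lx act[of i] act[of j] act[of l] unfolding goodP_def by simp
  next
    fix i j assume "i < d" "j < d" "i \<noteq> j"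
    then show "weyl_act w \<gamma> i \<noteq> weyl_act w \<gamma> j"
      using act xs(1) lx by (simp add: nth_eq_iff_index_eq)
  qed
  with wp show ?thesis by blast
qed

end
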